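(* Let $G$ be a Ricci-flat graph with maximum degree at most $4$. Then no edge of $G$ is contained both in a cycle of length $3$ and in a cycle of length $4$.
   Context: All graphs are simple (no loops or multiple edges), undirected, connected and locally finite; $d(x)$ is the degree of $x$ and $d(x,y)$ the graph distance. For a vertex $x$ and $\alpha\in[0,1]$ let $\mu_x^\alpha$ be the probability measure with $\mu_x^\alpha(x)=\alpha$, $\mu_x^\alpha(z)=\frac{1-\alpha}{d(x)}$ for $z\sim x$, and $0$ otherwise. The transportation distance is $W(\mu_1,\mu_2)=\inf_A\sum_{u,v}A(u,v)d(u,v)$ over all couplings $A$ of $\mu_1,\mu_2$. Set $k_\alpha(x,y)=1-W(\mu_x^\alpha,\mu_y^\alpha)/d(x,y)$ and $k(x,y)=\lim_{\alpha\to1}k_\alpha(x,y)/(1-\alpha)$ (Lin–Lu–Yau Ricci curvature). A graph is Ricci-flat if $k(x,y)=0$ for every edge $(x,y)$. An edge is contained in a cycle of length $\ell$ if some cycle subgraph of $G$ with $\ell$ vertices uses that edge. *)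

theory Defs
  imports Complex_Main
begin

text \<open>A graph is given by its adjacency relation E on the vertex type 'a (all elements
of 'a are vertices): simple (symmetric, irreflexive), locally finite, connected.\<close>

definition simple_graph :: "('a \<Rightarrow> 'a \<Rightarrow> bool) \<Rightarrow> bool" where
  "simple_graph E \<longleftrightarrow> (\<forall>x y. E x y \<longrightarrow> E y x) \<and> (\<forall>x. \<not> E x x)
     \<and> (\<forall>x. finite {y. E x y}) \<and> (\<forall>x y. E\<^sup>*\<^sup>* x y)"

definition degree :: "('a \<Rightarrow> 'a \<Rightarrow> bool) \<Rightarrow> 'a \<Rightarrow> nat" where
  "degree E x = card {y. E x y}"

definition gdist :: "('a \<Rightarrow> 'a \<Rightarrow> bool) \<Rightarrow> 'a \<Rightarrow> 'a \<Rightarrow> nat" where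
  "gdist E x y = (LEAST n. (E ^^ n) x y)"

definition mu :: "('a \<Rightarrow> 'a \<Rightarrow> bool) \<Rightarrow> real \<Rightarrow> 'a \<Rightarrow> 'a \<Rightarrow> real" where
  "mu E \<alpha> x z = (if z = x then \<alpha> else if E x z then (1 - \<alpha>) / real (degree E x) else 0)"

definition supp :: "('a \<Rightarrow> real) \<Rightarrow> 'a set" where
  "supp m = {u. m u \<noteq> 0}"

text \<open>Couplings of two finitely supported probability measures m1, m2. Any coupling is
supported on supp m1 \<times> supp m2, so we restrict to S = supp m1 \<union> supp m2.\<close>
definition coupling :: "('a \<Rightarrow> real) \<Rightarrow> ('a \<Rightarrow> real) \<Rightarrow> ('a \<Rightarrow> 'a \<Rightarrow> real) \<Rightarrow> bool" where
  "coupling m1 m2 A \<longleftrightarrow>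
     (let S = supp m1 \<union> supp m2 in
       (\<forall>u v. 0 \<le> A u v) \<and> (\<forall>u v. (u \<notin> S \<or> v \<notin> S) \<longrightarrow> A u v = 0)
       \<and> (\<forall>u\<in>S. (\<Sum>v\<in>S. A u v) = m1 u) \<and> (\<forall>v\<in>S. (\<Sum>u\<in>S. A u v) = m2 v))"

definition transport_cost :: "('a \<Rightarrow> 'a \<Rightarrow> bool) \<Rightarrow> ('a \<Rightarrow> real) \<Rightarrow> ('a \<Rightarrow> real) \<Rightarrow> ('a \<Rightarrow> 'a \<Rightarrow> real) \<Rightarrow> real" where
  "transport_cost E m1 m2 A =
     (let S = supp m1 \<union> supp m2 in (\<Sum>u\<in>S. \<Sum>v\<in>S. A u v * real (gdist E u v)))"

definition transport_dist :: "('a \<Rightarrow> 'a \<Rightarrow> bool) \<Rightarrow> ('a \<Rightarrow> real) \<Rightarrow> ('a \<Rightarrow> real) \<Rightarrow> real" where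
  "transport_dist E m1 m2 = Inf (transport_cost E m1 m2 ` {A. coupling m1 m2 A})"

definition kappa_alpha :: "('a \<Rightarrow> 'a \<Rightarrow> bool) \<Rightarrow> real \<Rightarrow> 'a \<Rightarrow> 'a \<Rightarrow> real" where
  "kappa_alpha E \<alpha> x y = 1 - transport_dist E (mu E \<alpha> x) (mu E \<alpha> y) / real (gdist E x y)"

definition ricci_flat :: "('a \<Rightarrow> 'a \<Rightarrow> bool) \<Rightarrow> bool" where
  "ricci_flat E \<longleftrightarrow> (\<forall>x y. E x y \<longrightarrow>
      ((\<lambda>\<alpha>. kappa_alpha E \<alpha> x y / (1 - \<alpha>)) \<longlongrightarrow> 0) (at_left 1))"

definition edge_in_cycle :: "('a \<Rightarrow> 'a \<Rightarrow> bool) \<Rightarrow> nat \<Rightarrow> 'a \<Rightarrow> 'a \<Rightarrow> bool" where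
  "edge_in_cycle E l x y \<longleftrightarrow> (\<exists>vs. length vs = l \<and> 3 \<le> l \<and> distinct vs
     \<and> (\<forall>i<l. E (vs ! i) (vs ! ((i + 1) mod l)))
     \<and> (\<exists>i<l. {vs ! i, vs ! ((i + 1) mod l)} = {x, y}))"

end

theory Submission
  imports Defs
begin

lemma gdist_le: "(E ^^ n) a b \<Longrightarrow> gdist E a b \<le> n"
  unfolding gdist_def by (rule Least_le)

lemma gdist_refl: "gdist E a a = 0"
  using gdist_le[where E=E and n=0 and a=a and b=a] by (simp add: relpowp_0_I)

lemma gdist_edge: "E a b \<Longrightarrow> gdist E a b \<le> 1"
  using gdist_le[where E=E and n=1 and a=a and b=b] by (metis relpowp_1)

lemma gdist_edge_eq: "E a b \<Longrightarrow> \<not> E a a \<Longrightarrow> gdist E a b = 1"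
proof -
  assume e: "E a b" and n: "\<not> E a a"
  have ab: "a \<noteq> b" using e n by auto
  have "gdist E a b \<noteq> 0"
  proof
    assume "gdist E a b = 0"
    moreover have "(E ^^ gdist E a b) a b" unfolding gdist_def
      by (rule LeastI[of _ 1]) (metis relpowp_1 e)
    ultimately show False using ab by simp
  qed
  thus ?thesis using gdist_edge[where E=E, OF e] by simp
qed

lemma gdist_2: "E a b \<Longrightarrow> E b c \<Longrightarrow> gdist E a c \<le> 2"
  by (rule gdist_le) (metis numeral_2_eq_2 relpowp_Suc_I relpowp_Suc_0)

lemma gdist_3: "E a b \<Longrightarrow> E b c \<Longrightarrow> E c d \<Longrightarrow> gdist E a d \<le> 3"
  by (rule gdist_le) (metis numeral_3_eq_3 numeral_2_eq_2 relpowp_Suc_I relpowp_Suc_0)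

definition pm :: "real \<Rightarrow> 'a \<Rightarrow> 'a \<Rightarrow> 'a \<Rightarrow> 'a \<Rightarrow> real" where
  "pm c p0 q0 p q = (if p = p0 \<and> q = q0 then c else 0)"

lemma pm_row: "finite S \<Longrightarrow> q0 \<in> S \<Longrightarrow> (\<Sum>q\<in>S. pm c p0 q0 p q) = (if p = p0 then c else 0)"
  by (cases "p = p0") (simp_all add: pm_def)

lemma pm_col: "finite S \<Longrightarrow> p0 \<in> S \<Longrightarrow> (\<Sum>p\<in>S. pm c p0 q0 p q) = (if q = q0 then c else 0)"
  by (cases "q = q0") (simp_all add: pm_def)

lemma pm_cost: "finite S \<Longrightarrow> p0 \<in> S \<Longrightarrow> q0 \<in> S \<Longrightarrow>
   (\<Sum>p\<in>S. \<Sum>q\<in>S. pm c p0 q0 p q * f p q) = c * f p0 q0"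
proof -
  assume f: "finite S" and p: "p0 \<in> S" and q: "q0 \<in> S"
  have "(\<Sum>q\<in>S. pm c p0 q0 p q * f p q) = (if p = p0 then c * f p0 q0 else 0)" for p
  proof (cases "p = p0")
    case True
    have "(\<Sum>q\<in>S. pm c p0 q0 p q * f p q) = (\<Sum>q\<in>S. if q = q0 then c * f p q else 0)"
      by (rule sum.cong) (auto simp: pm_def True)
    then show "(\<Sum>q\<in>S. pm c p0 q0 p q * f p q) = (if p = p0 then c * f p0 q0 else 0)" using f q True by (simp add: sum.delta)
  qed (simp add: pm_def)
  then show ?thesis using f p by simp
qed

lemma coupling_bound:
  fixes m1 m2 :: "'a \<Rightarrow> real" and D :: "'a \<Rightarrow> 'a \<Rightarrow> real"
  assumes S: "S = supp m1 \<union> supp m2" and fin: "finite S"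
    and s1: "(\<Sum>p\<in>S. m1 p) = 1" and s2: "(\<Sum>p\<in>S. m2 p) = 1"
    and Dnn: "\<forall>p q. 0 \<le> D p q"
    and row: "\<forall>p\<in>S. (\<Sum>q\<in>S. D p q) \<le> m1 p"
    and col: "\<forall>q\<in>S. (\<Sum>p\<in>S. D p q) \<le> m2 q"
    and d3: "\<forall>p\<in>S. \<forall>q\<in>S. gdist E p q \<le> 3"
  shows "transport_dist E m1 m2 \<le> (\<Sum>p\<in>S. \<Sum>q\<in>S. D p q * real (gdist E p q))
            + 3 * (1 - (\<Sum>p\<in>S. \<Sum>q\<in>S. D p q))"
proof -
  define M where "M = 1 - (\<Sum>p\<in>S. \<Sum>q\<in>S. D p q)"
  define r1 where "r1 p = m1 p - (\<Sum>q\<in>S. D p q)" for p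
  define r2 where "r2 q = m2 q - (\<Sum>p\<in>S. D p q)" for q
  define A where "A p q = (if p \<in> S \<and> q \<in> S then D p q + r1 p * r2 q / M else 0)" for p q
  have r1nn: "\<And>p. p \<in> S \<Longrightarrow> 0 \<le> r1 p" using row by (auto simp: r1_def)
  have r2nn: "\<And>p. p \<in> S \<Longrightarrow> 0 \<le> r2 p" using col by (auto simp: r2_def)
  have sr1: "(\<Sum>p\<in>S. r1 p) = M"
    unfolding r1_def M_def using s1 by (simp add: sum_subtractf)
  have sr2: "(\<Sum>p\<in>S. r2 p) = M"
  proof -
    have sw: "(\<Sum>q\<in>S. \<Sum>p\<in>S. D p q) = (\<Sum>p\<in>S. \<Sum>q\<in>S. D p q)" by (rule sum.swap)
    show ?thesis unfolding r2_def M_def using s2 sw by (simp add: sum_subtractf)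
  qed
  have Mnn: "0 \<le> M" unfolding sr1[symmetric] by (rule sum_nonneg) (rule r1nn)
  have r1z: "r1 p = 0" if "p \<in> S" "M = 0" for p
    using sum_nonneg_eq_0_iff[OF fin, of r1] r1nn sr1 that by simp
  have r2z: "r2 p = 0" if "p \<in> S" "M = 0" for p
    using sum_nonneg_eq_0_iff[OF fin, of r2] r2nn sr2 that by simp
  have cpl: "coupling m1 m2 A"
    unfolding coupling_def Let_def S[symmetric]
  proof (intro conjI allI impI ballI)
    fix u v show "0 \<le> A u v" unfolding A_def using Dnn r1nn r2nn Mnn by auto
  next
    fix u v assume "u \<notin> S \<or> v \<notin> S" then show "A u v = 0" unfolding A_def by auto
  next
    fix u assume u: "u \<in> S"
    have "(\<Sum>v\<in>S. A u v) = (\<Sum>v\<in>S. D u v) + r1 u * (\<Sum>v\<in>S. r2 v) / M"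
      using u by (simp add: A_def sum.distrib sum_divide_distrib[symmetric] sum_distrib_left)
    also have "\<dots> = m1 u"
      using sr2 r1z[OF u] by (cases "M = 0") (auto simp: r1_def)
    finally show "(\<Sum>v\<in>S. A u v) = m1 u" .
  next
    fix v assume v: "v \<in> S"
    have "(\<Sum>u\<in>S. A u v) = (\<Sum>u\<in>S. D u v) + (\<Sum>u\<in>S. r1 u) * r2 v / M"
      using v by (simp add: A_def sum.distrib sum_divide_distrib[symmetric] sum_distrib_right)
    also have "\<dots> = m2 v"
      using sr1 r2z[OF v] by (cases "M = 0") (auto simp: r2_def)
    finally show "(\<Sum>u\<in>S. A u v) = m2 v" .
  qed
  have "transport_cost E m1 m2 A = (\<Sum>p\<in>S. \<Sum>q\<in>S. D p q * real (gdist E p q))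
      + (\<Sum>p\<in>S. \<Sum>q\<in>S. r1 p * r2 q / M * real (gdist E p q))"
    unfolding transport_cost_def Let_def S[symmetric]
    by (simp add: A_def sum.distrib distrib_right)
  also have "(\<Sum>p\<in>S. \<Sum>q\<in>S. r1 p * r2 q / M * real (gdist E p q))
      \<le> (\<Sum>p\<in>S. \<Sum>q\<in>S. r1 p * r2 q / M * 3)"
  proof (intro sum_mono)
    fix p q assume p: "p \<in> S" and q: "q \<in> S"
    have c0: "0 \<le> r1 p * r2 q / M" using r1nn[OF p] r2nn[OF q] Mnn by simp
    have g3: "real (gdist E p q) \<le> 3" using d3 p q by auto
    show "r1 p * r2 q / M * real (gdist E p q) \<le> r1 p * r2 q / M * 3"
      using mult_left_mono[OF g3 c0] by simp
  qed
  also have "(\<Sum>p\<in>S. \<Sum>q\<in>S. r1 p * r2 q / M * 3) = 3 * ((\<Sum>p\<in>S. r1 p) * (\<Sum>q\<in>S. r2 q) / M)"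
  proof -
    have "(\<Sum>p\<in>S. \<Sum>q\<in>S. r1 p * r2 q / M * 3) = (\<Sum>p\<in>S. \<Sum>q\<in>S. (3 / M) * (r1 p * r2 q))"
      by (simp add: mult.commute)
    also have "\<dots> = (3 / M) * (\<Sum>p\<in>S. \<Sum>q\<in>S. r1 p * r2 q)"
      by (simp add: sum_distrib_left)
    also have "(\<Sum>p\<in>S. \<Sum>q\<in>S. r1 p * r2 q) = (\<Sum>p\<in>S. r1 p) * (\<Sum>q\<in>S. r2 q)"
      by (rule sum_product[symmetric])
    finally show ?thesis by simp
  qed
  also have "\<dots> = 3 * M" using sr1 sr2 by (cases "M = 0") (auto simp: power2_eq_square)
  finally have c: "transport_cost E m1 m2 A \<le> (\<Sum>p\<in>S. \<Sum>q\<in>S. D p q * real (gdist E p q)) + 3 * M"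
    by simp
  have "transport_dist E m1 m2 \<le> transport_cost E m1 m2 A"
    unfolding transport_dist_def
  proof (rule cInf_lower)
    show "transport_cost E m1 m2 A \<in> transport_cost E m1 m2 ` {A. coupling m1 m2 A}" using cpl by auto
    show "bdd_below (transport_cost E m1 m2 ` {A. coupling m1 m2 A})"
      by (rule bdd_belowI[of _ 0]) (auto simp: transport_cost_def coupling_def Let_def intro!: sum_nonneg)
  qed
  then show ?thesis using c M_def by simp
qed

lemma pm_tot: "finite S \<Longrightarrow> p0 \<in> S \<Longrightarrow> q0 \<in> S \<Longrightarrow>
   (\<Sum>p\<in>S. \<Sum>q\<in>S. pm c p0 q0 p q) = c"
  using pm_cost[of S p0 q0 c "\<lambda>_ _. 1"] by simp

lemma sg_sym: "simple_graph E \<Longrightarrow> E a b \<Longrightarrow> E b a"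
  unfolding simple_graph_def by blast
lemma sg_irr: "simple_graph E \<Longrightarrow> \<not> E a a"
  unfolding simple_graph_def by blast
lemma sg_fin: "simple_graph E \<Longrightarrow> finite {b. E a b}"
  unfolding simple_graph_def by blast

lemma deg_pos: "simple_graph E \<Longrightarrow> E v t \<Longrightarrow> 0 < degree E v"
  unfolding degree_def using sg_fin[of E v] by (auto simp: card_gt_0_iff)

lemma mu_supp: "simple_graph E \<Longrightarrow> E v t \<Longrightarrow> 0 < \<alpha> \<Longrightarrow> \<alpha> < 1 \<Longrightarrow>
   supp (mu E \<alpha> v) = insert v {p. E v p}"
  using deg_pos[of E v t] unfolding supp_def mu_def by auto

lemma mu_sum: assumes sg: "simple_graph E" and e: "E v t" and fS: "finite S"
  and sub: "insert v {p. E v p} \<subseteq> S"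
  shows "(\<Sum>p\<in>S. mu E \<alpha> v p) = 1"
proof -
  have fN: "finite {p. E v p}" using sg_fin[OF sg] .
  have "(\<Sum>p\<in>S. mu E \<alpha> v p) = (\<Sum>p\<in>insert v {p. E v p}. mu E \<alpha> v p)"
    by (rule sum.mono_neutral_right[OF fS sub]) (auto simp: mu_def)
  also have "\<dots> = \<alpha> + (\<Sum>p\<in>{p. E v p}. mu E \<alpha> v p)"
    using fN sg_irr[OF sg, of v] by (simp add: mu_def)
  also have "(\<Sum>p\<in>{p. E v p}. mu E \<alpha> v p) = (\<Sum>p\<in>{p. E v p}. (1 - \<alpha>) / real (degree E v))"
    by (rule sum.cong) (auto simp: mu_def sg_irr[OF sg])
  also have "\<dots> = 1 - \<alpha>" using deg_pos[OF sg e] by (simp add: degree_def)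
  finally show ?thesis by simp
qed

lemma pos_curv:
  assumes sg: "simple_graph E" and deg: "\<forall>v. degree E v \<le> 4"
    and exy: "E x y" and exz: "E x z" and eyz: "E y z" and exw: "E x w" and eyu: "E y u"
    and wy: "w \<noteq> y" and wz: "w \<noteq> z" and ux: "u \<noteq> x" and uz: "u \<noteq> z"
    and wu: "w = u \<or> E w u"
    and al1: "1/2 \<le> \<alpha>" and al2: "\<alpha> < 1"
  shows "1/4 \<le> kappa_alpha E \<alpha> x y / (1 - \<alpha>)"
proof -
  note sym = sg_sym[OF sg] and irr = sg_irr[OF sg]
  define \<epsilon> where "\<epsilon> = 1 - \<alpha>"
  define a where "a = \<epsilon> / real (degree E x)"
  define b where "b = \<epsilon> / real (degree E y)"
  define mn where "mn = min a b"
  define mx where "mx = max a b"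
  have dx: "0 < degree E x" using deg_pos[OF sg exy] .
  have dy: "0 < degree E y" using deg_pos[OF sg eyz] .
  have dx4: "real (degree E x) \<le> 4" using deg by (metis of_nat_le_iff of_nat_numeral)
  have dy4: "real (degree E y) \<le> 4" using deg by (metis of_nat_le_iff of_nat_numeral)
  have ep: "0 < \<epsilon>" using al2 by (simp add: \<epsilon>_def)
  have a1: "\<epsilon> / 4 \<le> a" unfolding a_def using dx dx4 ep by (intro divide_left_mono) auto
  have a2: "a \<le> \<epsilon>" unfolding a_def using dx ep by (simp add: divide_le_eq)
  have b1: "\<epsilon> / 4 \<le> b" unfolding b_def using dy dy4 ep by (intro divide_left_mono) auto
  have b2: "b \<le> \<epsilon>" unfolding b_def using dy ep by (simp add: divide_le_eq)
  have m1: "\<And>p. mu E \<alpha> x p = (if p = x then \<alpha> else if E x p then a else 0)"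
    by (simp add: mu_def a_def \<epsilon>_def)
  have m2: "\<And>p. mu E \<alpha> y p = (if p = y then \<alpha> else if E y p then b else 0)"
    by (simp add: mu_def b_def \<epsilon>_def)
  define S where "S = supp (mu E \<alpha> x) \<union> supp (mu E \<alpha> y)"
  have memS: "\<And>p. p \<in> S \<longleftrightarrow> E x p \<or> E y p"
    unfolding S_def using mu_supp[OF sg exy, of \<alpha>] mu_supp[OF sg eyz, of \<alpha>] al1 al2 exy sym
    by auto
  have fS: "finite S"
  proof -
    have "S \<subseteq> {p. E x p} \<union> {p. E y p}" using memS by auto
    thus ?thesis using sg_fin[OF sg, of x] sg_fin[OF sg, of y] finite_subset by blast
  qed
  have s1: "(\<Sum>p\<in>S. mu E \<alpha> x p) = 1"
    by (rule mu_sum[OF sg exy fS]) (auto simp: memS sym exy)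
  have s2: "(\<Sum>p\<in>S. mu E \<alpha> y p) = 1"
    by (rule mu_sum[OF sg eyz fS]) (auto simp: memS sym exy)
  have inS: "x \<in> S" "y \<in> S" "z \<in> S" "w \<in> S" "u \<in> S"
    using memS exy exz exw eyu sym by blast+
  have dist: "x \<noteq> y" "x \<noteq> z" "y \<noteq> z" "x \<noteq> w" "y \<noteq> u"
    using irr exy exz eyz exw eyu by auto
  define D where "D p q = pm b x x p q + pm a y y p q + pm mn z z p q + pm (\<alpha> - mx) x y p q
      + pm mn w u p q" for p q
  have mxa: "mx \<le> \<alpha>" using a2 b2 al1 by (simp add: mx_def \<epsilon>_def)
  have mnn: "0 \<le> mn" using a1 b1 ep by (simp add: mn_def)
  have Dnn: "\<forall>p q. 0 \<le> D p q"
    using a1 b1 ep mxa mnn by (auto simp: D_def pm_def)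
  have rowD: "\<And>p. (\<Sum>q\<in>S. D p q) = (if p = x then b + (\<alpha> - mx) else 0) + (if p = y then a else 0)
     + (if p = z then mn else 0) + (if p = w then mn else 0)"
    by (simp add: D_def sum.distrib pm_row fS inS)
  have colD: "\<And>q. (\<Sum>p\<in>S. D p q) = (if q = x then b else 0) + (if q = y then a + (\<alpha> - mx) else 0)
     + (if q = z then mn else 0) + (if q = u then mn else 0)"
    by (simp add: D_def sum.distrib pm_col fS inS)
  have row: "\<forall>p\<in>S. (\<Sum>q\<in>S. D p q) \<le> mu E \<alpha> x p"
  proof
    fix p assume "p \<in> S"
    show "(\<Sum>q\<in>S. D p q) \<le> mu E \<alpha> x p"
      unfolding rowD m1 using dist wy wz exy exz exw irr a1 b1 ep al1 al2 mnn
      by (auto simp: mn_def mx_def \<epsilon>_def)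
  qed
  have col: "\<forall>q\<in>S. (\<Sum>p\<in>S. D p q) \<le> mu E \<alpha> y q"
  proof
    fix q assume "q \<in> S"
    show "(\<Sum>p\<in>S. D p q) \<le> mu E \<alpha> y q"
      unfolding colD m2 using dist ux uz sym exy eyz eyu irr a1 b1 ep al1 al2 mnn
      by (auto simp: mn_def mx_def \<epsilon>_def)
  qed
  have d3: "\<forall>p\<in>S. \<forall>q\<in>S. gdist E p q \<le> 3"
  proof (intro ballI)
    fix p q assume p: "p \<in> S" and q: "q \<in> S"
    show "gdist E p q \<le> 3"
    proof (cases "E x p")
      case px: True
      show ?thesis
      proof (cases "E x q")
        case True thus ?thesis using gdist_2[where E=E, OF sym[OF px] True] by simp
      next
        case False hence "E y q" using q memS by blast
        thus ?thesis using gdist_3[where E=E, OF sym[OF px] exy] by simp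
      qed
    next
      case False hence py: "E y p" using p memS by blast
      show ?thesis
      proof (cases "E y q")
        case True thus ?thesis using gdist_2[where E=E, OF sym[OF py] True] by simp
      next
        case False hence "E x q" using q memS by blast
        thus ?thesis using gdist_3[where E=E, OF sym[OF py] sym[OF exy]] by simp
      qed
    qed
  qed
  have W: "transport_dist E (mu E \<alpha> x) (mu E \<alpha> y) \<le> (\<Sum>p\<in>S. \<Sum>q\<in>S. D p q * real (gdist E p q))
            + 3 * (1 - (\<Sum>p\<in>S. \<Sum>q\<in>S. D p q))"
    by (rule coupling_bound[OF S_def fS s1 s2 Dnn row col d3])
  have tot: "(\<Sum>p\<in>S. \<Sum>q\<in>S. D p q) = b + a + mn + (\<alpha> - mx) + mn"
    by (simp add: D_def sum.distrib pm_tot fS inS)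
  have dwu: "real (gdist E w u) \<le> 1" using wu gdist_edge[of E w u] gdist_refl[of E u] by auto
  have gxy: "gdist E x y = 1" using gdist_edge_eq[where E=E, OF exy irr[of x]] .
  have cost: "(\<Sum>p\<in>S. \<Sum>q\<in>S. D p q * real (gdist E p q)) = (\<alpha> - mx) + mn * real (gdist E w u)"
    by (simp add: D_def sum.distrib distrib_right pm_cost fS inS gdist_refl gxy)
  have "transport_dist E (mu E \<alpha> x) (mu E \<alpha> y) \<le> 1 - \<epsilon> / 4"
  proof -
    have "mn * real (gdist E w u) \<le> mn" using dwu mnn by (simp add: mult_left_le)
    moreover have "mn + mx = a + b" "1 - \<alpha> \<le> 4 * mn" "1 - \<alpha> \<le> 4 * mx"
      using a1 b1 by (auto simp: mn_def mx_def \<epsilon>_def)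
    moreover note W[unfolded tot cost]
    ultimately have "transport_dist E (mu E \<alpha> x) (mu E \<alpha> y) \<le> 3 - 2*\<alpha> - 8*mn - mx"
      by (simp add: algebra_simps)
    moreover have "3 - 2*\<alpha> - 8*mn - mx \<le> 1 - \<epsilon> / 4" using \<open>1 - \<alpha> \<le> 4 * mn\<close> \<open>1 - \<alpha> \<le> 4 * mx\<close>
      unfolding \<epsilon>_def by (simp add: field_simps)
    ultimately show ?thesis by linarith
  qed
  hence "\<epsilon> / 4 \<le> kappa_alpha E \<alpha> x y" unfolding kappa_alpha_def gxy by simp
  thus ?thesis using ep unfolding \<epsilon>_def by (simp add: pos_le_divide_eq)
qed

lemma tri:
  assumes sg: "simple_graph E" and c: "edge_in_cycle E 3 x y"
  shows "\<exists>z. E x z \<and> E y z \<and> z \<noteq> x \<and> z \<noteq> y"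
proof -
  note sym = sg_sym[OF sg]
  obtain vs i where len: "length vs = 3" and d: "distinct vs"
    and e: "\<forall>i<3. E (vs ! i) (vs ! ((i + 1) mod 3))" and i: "i < 3"
    and xy: "{vs ! i, vs ! ((i + 1) mod 3)} = {x, y}"
    using c unfolding edge_in_cycle_def by auto
  obtain v0 v1 v2 where vs: "vs = [v0, v1, v2]"
    using len by (auto simp: length_Suc_conv numeral_3_eq_3)
  have e01: "E v0 v1" and e12: "E v1 v2" and e20: "E v2 v0"
    using e[rule_format, of 0] e[rule_format, of 1] e[rule_format, of 2] by (auto simp: vs)
  have "i = 0 \<or> i = 1 \<or> i = 2" using i by auto
  then show ?thesis
    using xy d e01 e12 e20 sym[OF e01] sym[OF e12] sym[OF e20] unfolding vs
    by (auto simp: doubleton_eq_iff; blast)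
qed

lemma quad:
  assumes sg: "simple_graph E" and c: "edge_in_cycle E 4 x y"
  shows "\<exists>u w. E y u \<and> E u w \<and> E w x \<and> distinct [x, y, u, w]"
proof -
  note sym = sg_sym[OF sg]
  obtain vs i where len: "length vs = 4" and d: "distinct vs"
    and e: "\<forall>i<4. E (vs ! i) (vs ! ((i + 1) mod 4))" and i: "i < 4"
    and xy: "{vs ! i, vs ! ((i + 1) mod 4)} = {x, y}"
    using c unfolding edge_in_cycle_def by auto
  obtain v0 v1 v2 v3 where vs: "vs = [v0, v1, v2, v3]"
    using len by (auto simp: length_Suc_conv numeral_eq_Suc)
  have e01: "E v0 v1" and e12: "E v1 v2" and e23: "E v2 v3" and e30: "E v3 v0"
    using e[rule_format, of 0] e[rule_format, of 1] e[rule_format, of 2] e[rule_format, of 3]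
    by (auto simp: vs)
  have "i = 0 \<or> i = 1 \<or> i = 2 \<or> i = 3" using i by auto
  then show ?thesis
    using xy d e01 e12 e23 e30 sym[OF e01] sym[OF e12] sym[OF e23] sym[OF e30] unfolding vs
    by (auto simp: doubleton_eq_iff; blast)
qed

lemma not_flat:
  assumes sg: "simple_graph E" and deg: "\<forall>v. degree E v \<le> 4"
    and exy: "E x y" and exz: "E x z" and eyz: "E y z" and exw: "E x w" and eyu: "E y u"
    and wy: "w \<noteq> y" and wz: "w \<noteq> z" and ux: "u \<noteq> x" and uz: "u \<noteq> z"
    and wu: "w = u \<or> E w u"
    and rf: "ricci_flat E"
  shows False
proof -
  have lim: "((\<lambda>\<alpha>. kappa_alpha E \<alpha> x y / (1 - \<alpha>)) \<longlongrightarrow> 0) (at_left (1::real))"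
    using rf exy unfolding ricci_flat_def by blast
  have ev: "eventually (\<lambda>\<alpha>. 1/4 \<le> kappa_alpha E \<alpha> x y / (1 - \<alpha>)) (at_left (1::real))"
  proof -
    have "eventually (\<lambda>\<alpha>. \<alpha> \<in> {1/2<..<1}) (at_left (1::real))"
      by (rule eventually_at_left_real) simp
    then show ?thesis
      by (rule eventually_mono) (use pos_curv[OF sg deg exy exz eyz exw eyu wy wz ux uz wu] in auto)
  qed
  have "1/4 \<le> (0::real)"
    by (rule tendsto_lowerbound[OF lim ev]) simp
  then show False by simp
qed

theorem lemma6:
  fixes E :: "'a \<Rightarrow> 'a \<Rightarrow> bool"
  assumes "simple_graph E"
    and "ricci_flat E"
    and "\<forall>v. degree E v \<le> 4"
    and "E x y"
  shows "\<not> (edge_in_cycle E 3 x y \<and> edge_in_cycle E 4 x y)"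
proof
  assume h: "edge_in_cycle E 3 x y \<and> edge_in_cycle E 4 x y"
  note sg = assms(1) and rf = assms(2) and deg = assms(3) and exy = assms(4)
  note sym = sg_sym[OF sg]
  obtain z where exz: "E x z" and eyz: "E y z" and zx: "z \<noteq> x" and zy: "z \<noteq> y"
    using tri[OF sg] h by blast
  obtain u w where eyu: "E y u" and euw: "E u w" and ewx: "E w x" and dd: "distinct [x, y, u, w]"
    using quad[OF sg] h by blast
  show False
  proof (cases "z = w")
    case True
    show False
      by (rule not_flat[OF sg deg eyz sym[OF exy] sym[OF exz] eyu _ _ _ _ _ _ rf, of u])
        (use True dd euw sym in auto)
  next
    case zw: False
    show False
    proof (cases "z = u")
      case True
      show False
        by (rule not_flat[OF sg deg exz exy sym[OF eyz] sym[OF ewx] _ _ _ _ _ _ rf, of w])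
          (use True dd euw sym in auto)
    next
      case False
      show False
        by (rule not_flat[OF sg deg exy exz eyz sym[OF ewx] eyu _ _ _ _ _ rf])
          (use False zw dd euw sym in auto)
    qed
  qed
qed

end
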